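(* For any $\alpha_0,\alpha_1,\dots,\alpha_n\in\mathbf{C}$, every element of the $(n-1)$-dimensional Abelian Lie algebra $\mathcal{L}'=\mathrm{span}_{\mathbf{C}}\{Y^1_1,\dots,Y^n_n\}$ is a Lie symmetry of the generalized ladder system with parameters $\alpha_0,\dots,\alpha_n$; hence the generalized ladder system is integrable.
   Context: Coordinates $x=(x_1,\dots,x_n)\in\mathbf{C}^n$, $n\ge2$, on $\{u\ne0\}$. Notation: $u=\sum_{j=1}^n x_j$, $D=\sum_{j=1}^n x_j\,\partial/\partial x_j$, $Y^l_l = x_l u^{-1}\big(D-u\,\partial/\partial x_l\big)$. The generalized ladder system with parameters $\alpha_0,\dots,\alpha_n\in\mathbf{C}$ is the homogeneous Lotka–Volterra system $\dot x_i = x_i\sum_{j=1}^n(\alpha_0+\alpha_i-\alpha_j)x_j$, identified with the vector field $X_f=\sum_i x_i\sum_j(\alpha_0+\alpha_i-\alpha_j)x_j\,\partial/\partial x_i$. A vector field $X$ is a Lie symmetry if $[X_f,X]=0$. *)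

theory Defs
  imports "HOL-Analysis.Analysis"
begin

text \<open>Vector fields on (an open subset of) C^n are represented by their coefficient
  maps complex^'n => complex^'n, i.e. X = sum_i (X x)$i d/dx_i.\<close>

type_synonym 'n vfield = "complex ^ 'n \<Rightarrow> complex ^ 'n"

definition lie_bracket :: "'n::finite vfield \<Rightarrow> 'n vfield \<Rightarrow> 'n vfield" where
  "lie_bracket X Y p = frechet_derivative Y (at p) (X p) - frechet_derivative X (at p) (Y p)"

definition usum :: "complex ^ 'n::finite \<Rightarrow> complex" where
  "usum x = (\<Sum>j\<in>UNIV. x $ j)"

definition ladder_field :: "complex \<Rightarrow> ('n::finite \<Rightarrow> complex) \<Rightarrow> 'n vfield" where
  "ladder_field a0 a x = (\<chi> i. x $ i * (\<Sum>j\<in>UNIV. (a0 + a i - a j) * x $ j))"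

text \<open>Y^l_l = x_l u^{-1} (D - u d/dx_l), with D = sum_j x_j d/dx_j (Euler field).\<close>
definition Yfield :: "'n::finite \<Rightarrow> 'n vfield" where
  "Yfield l x = (\<chi> i. x $ l / usum x * (x $ i - (if i = l then usum x else 0)))"

definition lie_symmetry :: "'n::finite vfield \<Rightarrow> 'n vfield \<Rightarrow> bool" where
  "lie_symmetry Xf X \<longleftrightarrow> (\<forall>p. usum p \<noteq> 0 \<longrightarrow> lie_bracket Xf X p = 0)"

end

theory Submission
  imports Defs
begin

definition LL :: "('n::finite \<Rightarrow> complex) \<Rightarrow> complex ^ 'n \<Rightarrow> complex" where
  "LL w y = (\<Sum>j\<in>UNIV. w j * y $ j)"

lemma bl_axis: "bounded_linear (\<lambda>c::complex. axis i c :: complex ^ 'n::finite)"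
proof -
  have "linear (\<lambda>c::complex. axis i c :: complex ^ 'n::finite)"
    by (rule linearI) (auto simp: axis_def vec_eq_iff)
  then show ?thesis using linear_conv_bounded_linear by blast
qed

lemma vec_has_derivative:
  fixes f :: "'a::real_normed_vector \<Rightarrow> complex ^ 'n::finite"
  assumes "\<And>i. ((\<lambda>x. f x $ i) has_derivative (\<lambda>h. f' h $ i)) F"
  shows "(f has_derivative f') F"
proof -
  have e: "\<And>v::complex^'n. v = (\<Sum>i\<in>UNIV. axis i (v $ i))"
    by (simp add: vec_eq_iff axis_def sum_component if_distrib cong: if_cong)
  have "((\<lambda>x. \<Sum>i\<in>UNIV. axis i (f x $ i)) has_derivative (\<lambda>h. \<Sum>i\<in>UNIV. axis i (f' h $ i))) F"
    by (intro has_derivative_sum bounded_linear.has_derivative[OF bl_axis] assms)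
  then show ?thesis by (subst (asm) e[symmetric], subst (asm) e[symmetric])
qed

lemma LL_F: "LL w (ladder_field a0 a p) = (a0 * usum p - LL a p) * LL w p + usum p * LL (\<lambda>j. w j * a j) p"
proof -
  have "LL w (ladder_field a0 a p) = (\<Sum>j\<in>UNIV. w j * (p $ j * ((a0 + a j) * usum p - LL a p)))"
    unfolding LL_def ladder_field_def usum_def
    by (simp add: algebra_simps sum_distrib_left sum_subtractf sum.distrib)
  also have "\<dots> = (a0 * usum p - LL a p) * LL w p + usum p * LL (\<lambda>j. w j * a j) p"
    unfolding LL_def
    by (simp add: algebra_simps sum_distrib_left sum_distrib_right sum_subtractf sum.distrib)
  finally show ?thesis .
qed

lemma Z_eq:
  assumes "usum x \<noteq> 0"
  shows "(\<Sum>l\<in>UNIV. (\<chi> i. c l * Yfield l x $ i)) = (\<chi> i. x $ i * (LL c x / usum x) - c i * x $ i)"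
proof (subst vec_eq_iff, intro allI)
  fix i
  have "(\<Sum>l\<in>UNIV. (\<chi> i. c l * Yfield l x $ i)) $ i = (\<Sum>l\<in>UNIV. c l * x $ l * x $ i / usum x - (if l = i then c i * x $ i else 0))"
    unfolding sum_component using assms by (intro sum.cong) (auto simp: Yfield_def field_simps)
  also have "\<dots> = x $ i * (LL c x / usum x) - c i * x $ i"
    by (simp add: sum_subtractf LL_def sum_divide_distrib sum_distrib_left algebra_simps)
  finally show "(\<Sum>l\<in>UNIV. (\<chi> i. c l * Yfield l x $ i)) $ i = (\<chi> i. x $ i * (LL c x / usum x) - c i * x $ i) $ i" by simp
qed

lemma LL_Z: "LL w (\<chi> i. x $ i * (LL c x / usum x) - c i * x $ i) = LL w x * LL c x / usum x - LL (\<lambda>j. w j * c j) x"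
  unfolding LL_def
  by (simp add: algebra_simps sum_subtractf sum_distrib_left sum_distrib_right sum_divide_distrib)

lemma d_nth[derivative_intros]: "((\<lambda>x::complex^'n::finite. x $ i) has_derivative (\<lambda>h. h $ i)) F"
  by (rule bounded_linear.has_derivative[OF bounded_linear_vec_nth has_derivative_ident])

lemma d_LL[derivative_intros]: "(LL w has_derivative LL w) F"
  unfolding LL_def[abs_def] by (intro derivative_eq_intros) auto

lemma usum_LL: "usum x = LL (\<lambda>_. 1) x"
  by (simp add: usum_def LL_def)

lemma phi: "(\<Sum>j\<in>UNIV. (a0 + a i - a j) * y $ j) = (a0 + a i) * LL (\<lambda>_. 1) y - LL a y"
  unfolding LL_def by (simp add: algebra_simps sum_subtractf sum_distrib_left sum.distrib)

lemma dF: "(ladder_field a0 a has_derivative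
   (\<lambda>h. \<chi> i. h $ i * ((a0 + a i) * LL (\<lambda>_. 1) p - LL a p) + p $ i * ((a0 + a i) * LL (\<lambda>_. 1) h - LL a h))) (at p)"
proof -
  have e: "ladder_field a0 a = (\<lambda>x. \<chi> i. x $ i * ((a0 + a i) * LL (\<lambda>_. 1) x - LL a x))"
    by (rule ext) (simp add: ladder_field_def phi)
  show ?thesis unfolding e
    by (rule vec_has_derivative) (auto intro!: derivative_eq_intros simp: algebra_simps)
qed

lemma dZ:
  assumes "usum p \<noteq> 0"
  shows "((\<lambda>x. \<Sum>l\<in>UNIV. (\<chi> i. c l * Yfield l x $ i)) has_derivative
   (\<lambda>h. \<chi> i. h $ i * (LL c p / LL (\<lambda>_. 1) p) + p $ i * ((LL c h * LL (\<lambda>_. 1) p - LL c p * LL (\<lambda>_. 1) h) / (LL (\<lambda>_. 1) p)^2) - c i * h $ i)) (at p)"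
proof -
  have op: "open {x::complex^'n. LL (\<lambda>_. 1) x \<noteq> 0}"
    by (rule open_Collect_neq) (auto intro!: continuous_intros simp: LL_def)
  have "((\<lambda>x. \<chi> i. x $ i * (LL c x / LL (\<lambda>_. 1) x) - c i * x $ i) has_derivative
   (\<lambda>h. \<chi> i. h $ i * (LL c p / LL (\<lambda>_. 1) p) + p $ i * ((LL c h * LL (\<lambda>_. 1) p - LL c p * LL (\<lambda>_. 1) h) / (LL (\<lambda>_. 1) p)^2) - c i * h $ i)) (at p)"
    using assms unfolding usum_LL
    by (intro vec_has_derivative) (auto intro!: derivative_eq_intros simp: field_simps power2_eq_square)
  then show ?thesis
    by (rule has_derivative_transform_within_open[OF _ op]) (use assms in \<open>auto simp: Z_eq usum_LL\<close>)
qed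

theorem theorem3:
  fixes a0 :: complex and a :: "'n::finite \<Rightarrow> complex" and c :: "'n \<Rightarrow> complex"
  assumes "CARD('n) \<ge> 2"
  shows "lie_symmetry (ladder_field a0 a) (\<lambda>x. \<Sum>l\<in>UNIV. (\<chi> i. c l * Yfield l x $ i))"
  unfolding lie_symmetry_def
proof (intro allI impI)
  fix p :: "complex^'n"
  assume u: "usum p \<noteq> 0"
  note fF = frechet_derivative_at[OF dF, symmetric]
  note fZ = frechet_derivative_at[OF dZ[OF u], symmetric]
  define U where "U = LL (\<lambda>_. 1) p"
  define A where "A = LL a p"
  define S where "S = LL c p"
  define B where "B = LL (\<lambda>j. c j * a j) p"
  define Zp where "Zp = (\<chi> i. p $ i * (LL c p / usum p) - c i * p $ i)"
  have u1: "U \<noteq> 0" using u by (simp add: usum_LL U_def)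
  have Fi: "\<And>i. ladder_field a0 a p $ i = p $ i * ((a0 + a i) * U - A)"
    by (simp add: ladder_field_def phi U_def A_def)
  have Zi: "\<And>i. Zp $ i = p $ i * (S / U) - c i * p $ i"
    by (simp add: Zp_def S_def U_def usum_LL)
  have e1: "LL (\<lambda>_. 1) (ladder_field a0 a p) = a0 * U * U"
    using LL_F[of "\<lambda>_. 1" a0 a p] by (simp add: usum_LL U_def A_def algebra_simps)
  have e2: "LL c (ladder_field a0 a p) = (a0 * U - A) * S + U * B"
    using LL_F[of c a0 a p] by (simp add: usum_LL U_def A_def S_def B_def)
  have e3: "LL (\<lambda>_. 1) Zp = 0"
    using LL_Z[of "\<lambda>_. 1" p c] u1 by (simp add: Zp_def usum_LL U_def)
  have e4: "LL a Zp = A * S / U - B"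
    using LL_Z[of a p c] by (simp add: Zp_def usum_LL U_def A_def S_def B_def mult.commute)
  show "lie_bracket (ladder_field a0 a) (\<lambda>x. \<Sum>l\<in>UNIV. (\<chi> i. c l * Yfield l x $ i)) p = 0"
    unfolding lie_bracket_def fF fZ Z_eq[OF u] unfolding Zp_def[symmetric] unfolding U_def[symmetric] S_def[symmetric]
    apply (simp only: vec_eq_iff vector_minus_component vec_lambda_beta zero_index Fi Zi e1 e2 e3 e4 A_def[symmetric])
    using u1 by (simp add: field_simps power2_eq_square)
qed

end
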